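(* Let $G=K_n$ with $n\geq 3$, let $g:A\to B$ be a function with $s=|g(A)|$ satisfying $2<s<n$. If some $n-s+1$ vertices of $A$ have the same image under $g$ (i.e. $|g^{-1}(v)|=n-s+1$ for some $v\in B$), then $fix(F_G)=2n-(s+3)$.
   Context: A set $S\subseteq V(H)$ is a fixing set of a graph $H$ if the only automorphism of $H$ fixing every vertex of $S$ is the identity; $fix(H)$ is the minimum cardinality of a fixing set of $H$. Functigraph: let $G_1,G_2$ be disjoint copies of a connected graph $G$, with $A=V(G_1)$, $B=V(G_2)$, and let $g:A\to B$ be a function. The functigraph $F_G$ has vertex set $A\cup B$ and edge set $E(G_1)\cup E(G_2)\cup\{ug(u):u\in A\}$. *)

theory Defs
  imports Main "HOL-Library.FuncSet"
begin

text \<open>A (simple) graph is given by a vertex set V and a symmetric adjacency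
  predicate E; only adjacencies between vertices of V matter.\<close>

definition is_automorphism :: "'a set \<Rightarrow> ('a \<Rightarrow> 'a \<Rightarrow> bool) \<Rightarrow> ('a \<Rightarrow> 'a) \<Rightarrow> bool" where
  "is_automorphism V E \<sigma> \<longleftrightarrow>
     bij_betw \<sigma> V V \<and> (\<forall>u\<in>V. \<forall>v\<in>V. E u v \<longleftrightarrow> E (\<sigma> u) (\<sigma> v))"

definition fixing_set :: "'a set \<Rightarrow> ('a \<Rightarrow> 'a \<Rightarrow> bool) \<Rightarrow> 'a set \<Rightarrow> bool" where
  "fixing_set V E S \<longleftrightarrow> S \<subseteq> V \<and>
     (\<forall>\<sigma>. is_automorphism V E \<sigma> \<and> (\<forall>x\<in>S. \<sigma> x = x) \<longrightarrow> (\<forall>x\<in>V. \<sigma> x = x))"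

definition fix_num :: "'a set \<Rightarrow> ('a \<Rightarrow> 'a \<Rightarrow> bool) \<Rightarrow> nat" where
  "fix_num V E = (LEAST k. \<exists>S. fixing_set V E S \<and> card S = k)"

text \<open>Functigraph: vertices Inl a (copy G_1, the set A) and Inr b (copy G_2, the set B).\<close>
definition fg_verts :: "'a set \<Rightarrow> ('a + 'a) set" where
  "fg_verts V = Inl ` V \<union> Inr ` V"

fun fg_edge :: "('a \<Rightarrow> 'a \<Rightarrow> bool) \<Rightarrow> ('a \<Rightarrow> 'a) \<Rightarrow> 'a + 'a \<Rightarrow> 'a + 'a \<Rightarrow> bool" where
  "fg_edge E g (Inl a) (Inl b) = E a b"
| "fg_edge E g (Inr a) (Inr b) = E a b"
| "fg_edge E g (Inl a) (Inr b) = (g a = b)"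
| "fg_edge E g (Inr b) (Inl a) = (g a = b)"

definition K_verts :: "nat \<Rightarrow> nat set" where
  "K_verts n = {0..<n}"

definition K_edge :: "nat \<Rightarrow> nat \<Rightarrow> bool" where
  "K_edge a b \<longleftrightarrow> a \<noteq> b"

end

theory Submission
  imports Defs
begin


definition sw :: "nat \<Rightarrow> nat \<Rightarrow> nat \<Rightarrow> nat" where
  "sw x y z = (if z = x then y else if z = y then x else z)"

lemma sw_bij: "x \<in> V \<Longrightarrow> y \<in> V \<Longrightarrow> bij_betw (sw x y) V V"
  by (rule bij_betw_byWitness[where f'="sw x y"]) (auto simp: sw_def)

definition msum :: "(nat \<Rightarrow> nat) \<Rightarrow> (nat \<Rightarrow> nat) \<Rightarrow> nat + nat \<Rightarrow> nat + nat" where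
  "msum f h x = (case x of Inl a \<Rightarrow> Inl (f a) | Inr b \<Rightarrow> Inr (h b))"

lemma msum_simps[simp]: "msum f h (Inl a) = Inl (f a)" "msum f h (Inr b) = Inr (h b)"
  by (simp_all add: msum_def)

lemma msum_aut:
  assumes f: "bij_betw f V V" and h: "bij_betw h V V" and gV: "g \<in> V \<rightarrow> V"
    and c: "\<forall>a\<in>V. g (f a) = h (g a)"
  shows "is_automorphism (fg_verts V) (fg_edge K_edge g) (msum f h)"
proof -
  have fi: "inj_on f V" and fim: "f ` V = V" using f by (auto simp: bij_betw_def)
  have hi: "inj_on h V" and him: "h ` V = V" using h by (auto simp: bij_betw_def)
  have "inj_on (msum f h) (fg_verts V)"
  proof (rule inj_onI)
    fix x y assume x: "x \<in> fg_verts V" and y: "y \<in> fg_verts V" and e: "msum f h x = msum f h y"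
    show "x = y"
    proof (cases x)
      case (Inl a)
      then obtain b where yb: "y = Inl b" using e by (cases y) auto
      have "a \<in> V" "b \<in> V" using x y Inl yb by (auto simp: fg_verts_def)
      moreover have "f a = f b" using e Inl yb by simp
      ultimately show ?thesis using Inl yb inj_onD[OF fi] by blast
    next
      case (Inr a)
      then obtain b where yb: "y = Inr b" using e by (cases y) auto
      have "a \<in> V" "b \<in> V" using x y Inr yb by (auto simp: fg_verts_def)
      moreover have "h a = h b" using e Inr yb by simp
      ultimately show ?thesis using Inr yb inj_onD[OF hi] by blast
    qed
  qed
  moreover have "msum f h ` fg_verts V = fg_verts V"
  proof -
    have "msum f h ` fg_verts V = Inl ` (f ` V) \<union> Inr ` (h ` V)"
      unfolding fg_verts_def image_Un image_image by simp
    thus ?thesis using fim him by (simp add: fg_verts_def)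
  qed
  moreover have "\<forall>u\<in>fg_verts V. \<forall>w\<in>fg_verts V. fg_edge K_edge g u w \<longleftrightarrow> fg_edge K_edge g (msum f h u) (msum f h w)"
  proof (intro ballI)
    fix u w assume u: "u \<in> fg_verts V" and w: "w \<in> fg_verts V"
    show "fg_edge K_edge g u w \<longleftrightarrow> fg_edge K_edge g (msum f h u) (msum f h w)"
    proof (cases u)
      case (Inl a)
      with u have a: "a \<in> V" by (auto simp: fg_verts_def)
      show ?thesis
      proof (cases w)
        case (Inl b) with w have "b \<in> V" by (auto simp: fg_verts_def)
        thus ?thesis using a Inl \<open>u = Inl a\<close> inj_on_eq_iff[OF fi] by (simp add: K_edge_def)
      next
        case (Inr b) with w have "b \<in> V" by (auto simp: fg_verts_def)
        moreover have "g a \<in> V" using gV a by auto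
        ultimately have "(h (g a) = h b) = (g a = b)" using inj_on_eq_iff[OF hi] by blast
        thus ?thesis using a Inr \<open>u = Inl a\<close> c by simp
      qed
    next
      case (Inr a)
      with u have a: "a \<in> V" by (auto simp: fg_verts_def)
      show ?thesis
      proof (cases w)
        case (Inr b) with w have "b \<in> V" by (auto simp: fg_verts_def)
        thus ?thesis using a Inr \<open>u = Inr a\<close> inj_on_eq_iff[OF hi] by (simp add: K_edge_def)
      next
        case (Inl b) with w have "b \<in> V" by (auto simp: fg_verts_def)
        moreover have "g b \<in> V" using gV \<open>b \<in> V\<close> by auto
        ultimately have "(h (g b) = h a) = (g b = a)" using inj_on_eq_iff[OF hi] a by blast
        thus ?thesis using \<open>b \<in> V\<close> Inl \<open>u = Inr a\<close> c by simp
      qed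
    qed
  qed
  ultimately show ?thesis unfolding is_automorphism_def bij_betw_def by blast
qed

lemma one_left:
  assumes "inj_on \<sigma> D" "T \<subseteq> D" "\<forall>x\<in>T. \<sigma> x \<in> T" "\<forall>x\<in>T-{t0}. \<sigma> x = x" "t0 \<in> T"
  shows "\<sigma> t0 = t0"
proof (rule ccontr)
  assume ne: "\<sigma> t0 \<noteq> t0"
  have "\<sigma> t0 \<in> T - {t0}" using assms ne by auto
  hence "\<sigma> (\<sigma> t0) = \<sigma> t0" using assms by auto
  thus False using assms ne \<open>\<sigma> t0 \<in> T - {t0}\<close> unfolding inj_on_def by blast
qed

lemma aut_deg:
  assumes a: "is_automorphism W E \<sigma>" and x: "x \<in> W"
  shows "card {y\<in>W. E (\<sigma> x) y} = card {y\<in>W. E x y}"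
proof -
  have b: "bij_betw \<sigma> W W" and e: "\<forall>u\<in>W. \<forall>v\<in>W. E u v \<longleftrightarrow> E (\<sigma> u) (\<sigma> v)"
    using a by (auto simp: is_automorphism_def)
  have i: "inj_on \<sigma> W" and im: "\<sigma> ` W = W" using b by (auto simp: bij_betw_def)
  have "\<sigma> ` {y\<in>W. E x y} = {y\<in>W. E (\<sigma> x) y}"
  proof
    show "\<sigma> ` {y\<in>W. E x y} \<subseteq> {y\<in>W. E (\<sigma> x) y}" using e x im by auto
    show "{y\<in>W. E (\<sigma> x) y} \<subseteq> \<sigma> ` {y\<in>W. E x y}"
    proof
      fix z assume z: "z \<in> {y\<in>W. E (\<sigma> x) y}"
      then obtain y where "y \<in> W" "z = \<sigma> y" using im by auto
      thus "z \<in> \<sigma> ` {y\<in>W. E x y}" using z e x by auto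
    qed
  qed
  moreover have "inj_on \<sigma> {y\<in>W. E x y}" using i by (auto intro: inj_on_subset)
  ultimately show ?thesis by (metis card_image)
qed


locale fgK =
  fixes n s :: nat and g :: "nat \<Rightarrow> nat" and v :: nat
  assumes gV: "g \<in> K_verts n \<rightarrow> K_verts n"
    and s_def: "s = card (g ` K_verts n)"
    and s2: "2 < s" and sn: "s < n"
    and vV: "v \<in> K_verts n"
    and cardP: "card {a \<in> K_verts n. g a = v} = n - s + 1"
begin

abbreviation "V \<equiv> K_verts n"
definition "P = {a \<in> V. g a = v}"
definition "W = g ` V - {v}"
definition "U = V - g ` V"
abbreviation "VV \<equiv> fg_verts V"
abbreviation "E \<equiv> fg_edge K_edge g"

lemma finV: "finite V" and cardV: "card V = n" by (simp_all add: K_verts_def)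

lemma gVi: "a \<in> V \<Longrightarrow> g a \<in> V" using gV by auto

lemma cardP': "card P = n - s + 1" using cardP by (simp add: P_def)

lemma PV: "P \<subseteq> V" by (auto simp: P_def)

lemma finP: "finite P" using finV PV finite_subset by blast

lemma v_img: "v \<in> g ` V"
proof -
  have "P \<noteq> {}" using cardP' by auto
  then show ?thesis by (auto simp: P_def)
qed

lemma cardVP: "card (V - P) = s - 1"
  using card_Diff_subset[OF finP PV] cardV cardP' sn by simp

lemma gimg_sub: "g ` V \<subseteq> V" using gV by auto

lemma cardW: "card W = s - 1"
  unfolding W_def using v_img s_def by (simp add: card_Diff_singleton finV)

lemma img_VP: "g ` (V - P) = W"
  unfolding W_def P_def by auto

lemma finW: "finite W" unfolding W_def using finV by simp

lemma inj_VP: "inj_on g (V - P)"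
  using inj_on_iff_eq_card[of "V - P" g] finV img_VP cardW cardVP by simp

lemma cardU: "card U = n - s"
  unfolding U_def using card_Diff_subset[OF finite_imageI[OF finV] gimg_sub] cardV s_def by simp

lemma finU: "finite U" unfolding U_def using finV by simp

lemma UV: "U \<subseteq> V" and WV: "W \<subseteq> V" using gimg_sub by (auto simp: U_def W_def)

lemma finVV: "finite VV" using finV by (simp add: fg_verts_def)

lemma g_eq: assumes "a \<in> V" "b \<in> V" "g a = g b" "g a \<noteq> v" shows "a = b"
proof -
  have "a \<in> V - P" "b \<in> V - P" using assms by (auto simp: P_def)
  thus ?thesis using inj_onD[OF inj_VP] assms(3) by blast
qed

lemma UW_disj: "U \<inter> W = {}" by (auto simp: U_def W_def)

lemma lower:
  assumes fs: "fixing_set VV E S"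
  shows "2*n - (s+3) \<le> card S"
proof -
  have SVV: "S \<subseteq> VV" using fs unfolding fixing_set_def by blast
  have fx: "\<forall>x\<in>VV. \<sigma> x = x" if "is_automorphism VV E \<sigma>" "\<forall>x\<in>S. \<sigma> x = x" for \<sigma>
    using fs that unfolding fixing_set_def by blast
  have finS: "finite S" using SVV finVV finite_subset by blast
  have Pc: "x = y" if "x\<in>P" "y\<in>P" "Inl x \<notin> S" "Inl y \<notin> S" for x y
  proof -
    have xyV: "x\<in>V" "y\<in>V" using that PV by auto
    have aut: "is_automorphism VV E (msum (sw x y) id)"
      apply (rule msum_aut[OF sw_bij[OF xyV] bij_betw_id gV])
      using that by (auto simp: sw_def P_def)
    have "\<forall>z\<in>S. msum (sw x y) id z = z"
    proof
      fix z assume "z \<in> S"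
      then show "msum (sw x y) id z = z" using that by (cases z) (auto simp: sw_def)
    qed
    hence "\<forall>z\<in>VV. msum (sw x y) id z = z" using fx aut by blast
    moreover have "Inl x \<in> VV" using xyV by (simp add: fg_verts_def)
    ultimately have "msum (sw x y) id (Inl x) = Inl x" by blast
    thus ?thesis by (simp add: sw_def split: if_splits)
  qed
  have Uc: "x = y" if "x\<in>U" "y\<in>U" "Inr x \<notin> S" "Inr y \<notin> S" for x y
  proof -
    have xyV: "x\<in>V" "y\<in>V" using that UV by auto
    have aut: "is_automorphism VV E (msum id (sw x y))"
      apply (rule msum_aut[OF bij_betw_id sw_bij[OF xyV] gV])
      using that by (auto simp: sw_def U_def)
    have "\<forall>z\<in>S. msum id (sw x y) z = z"
    proof
      fix z assume "z \<in> S"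
      then show "msum id (sw x y) z = z" using that by (cases z) (auto simp: sw_def)
    qed
    hence "\<forall>z\<in>VV. msum id (sw x y) z = z" using fx aut by blast
    moreover have "Inr x \<in> VV" using xyV by (simp add: fg_verts_def)
    ultimately have "msum id (sw x y) (Inr x) = Inr x" by blast
    thus ?thesis by (simp add: sw_def split: if_splits)
  qed
  define aw where "aw = inv_into (V-P) g"
  have aw: "aw w \<in> V - P" "g (aw w) = w" if "w\<in>W" for w
  proof -
    have "w \<in> g ` (V - P)" using that img_VP by simp
    thus "aw w \<in> V - P" "g (aw w) = w" unfolding aw_def by (rule inv_into_into, rule f_inv_into_f)
  qed
  have Wc: "x = y" if "x\<in>W" "y\<in>W" "Inr x \<notin> S" "Inr y \<notin> S" "Inl (aw x) \<notin> S" "Inl (aw y) \<notin> S" for x y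
  proof -
    have xyV: "x\<in>V" "y\<in>V" using that WV by auto
    have axy: "aw x \<in> V" "aw y \<in> V" "g (aw x) = x" "g (aw y) = y" using aw that by auto
    have xv: "x \<noteq> v" "y \<noteq> v" using that by (auto simp: W_def)
    have cond: "\<forall>a\<in>V. g (sw (aw x) (aw y) a) = sw x y (g a)"
    proof
      fix a assume a: "a \<in> V"
      show "g (sw (aw x) (aw y) a) = sw x y (g a)"
      proof (cases "a = aw x")
        case True thus ?thesis using axy by (simp add: sw_def)
      next
        case F1: False
        show ?thesis
        proof (cases "a = aw y")
          case True thus ?thesis using axy F1 by (auto simp: sw_def)
        next
          case False
          have "g a \<noteq> x" using g_eq[of a "aw x"] a axy xv F1 by auto
          moreover have "g a \<noteq> y" using g_eq[of a "aw y"] a axy xv False by auto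
          ultimately show ?thesis using F1 False by (simp add: sw_def)
        qed
      qed
    qed
    have aut: "is_automorphism VV E (msum (sw (aw x) (aw y)) (sw x y))"
      by (rule msum_aut[OF sw_bij[OF axy(1,2)] sw_bij[OF xyV] gV cond])
    have "\<forall>z\<in>S. msum (sw (aw x) (aw y)) (sw x y) z = z"
    proof
      fix z assume "z \<in> S"
      then show "msum (sw (aw x) (aw y)) (sw x y) z = z" using that by (cases z) (auto simp: sw_def)
    qed
    hence "\<forall>z\<in>VV. msum (sw (aw x) (aw y)) (sw x y) z = z" using fx aut by blast
    moreover have "Inr x \<in> VV" using xyV by (simp add: fg_verts_def)
    ultimately have "msum (sw (aw x) (aw y)) (sw x y) (Inr x) = Inr x" by blast
    thus ?thesis by (simp add: sw_def split: if_splits)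
  qed
  define SP where "SP = S \<inter> Inl ` P"
  define SU where "SU = S \<inter> Inr ` U"
  define SW where "SW = S \<inter> (Inr ` W \<union> Inl ` (V - P))"
  have c1: "card P \<le> card SP + 1"
  proof -
    have "card (Inl ` P - S) \<le> Suc 0"
      using finP Pc by (subst card_le_Suc0_iff_eq) auto
    moreover have eq: "SP \<union> (Inl ` P - S) = Inl ` P" by (auto simp: SP_def)
    have "card (Inl ` P :: (nat+nat) set) \<le> card SP + card (Inl ` P - S)" using card_Un_le[of SP "Inl ` P - S"] unfolding eq .
    moreover have "card (Inl ` P :: (nat+nat) set) = card P" by (simp add: card_image)
    ultimately show ?thesis by linarith
  qed
  have c2: "card U \<le> card SU + 1"
  proof -
    have "card (Inr ` U - S) \<le> Suc 0"
      using finU Uc by (subst card_le_Suc0_iff_eq) auto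
    moreover have eq: "SU \<union> (Inr ` U - S) = Inr ` U" by (auto simp: SU_def)
    have "card (Inr ` U :: (nat+nat) set) \<le> card SU + card (Inr ` U - S)" using card_Un_le[of SU "Inr ` U - S"] unfolding eq .
    moreover have "card (Inr ` U :: (nat+nat) set) = card U" by (simp add: card_image)
    ultimately show ?thesis by linarith
  qed
  have c3: "card W \<le> card SW + 1"
  proof -
    define Q where "Q = {w\<in>W. Inr w \<notin> S \<and> Inl (aw w) \<notin> S}"
    have "finite Q" using finW by (simp add: Q_def)
    have cQ: "card Q \<le> Suc 0"
      using \<open>finite Q\<close> Wc by (subst card_le_Suc0_iff_eq) (auto simp: Q_def)
    define hh where "hh = (\<lambda>z. case z of Inl a \<Rightarrow> g a | Inr b \<Rightarrow> b)"
    have "W - Q \<subseteq> hh ` SW"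
    proof
      fix w assume w: "w \<in> W - Q"
      show "w \<in> hh ` SW"
      proof (cases "Inr w \<in> S")
        case True
        hence "Inr w \<in> SW" using w by (auto simp: SW_def)
        moreover have "hh (Inr w) = w" by (simp add: hh_def)
        ultimately show ?thesis by (metis imageI)
      next
        case False
        hence "Inl (aw w) \<in> S" using w by (auto simp: Q_def)
        hence "Inl (aw w) \<in> SW" using w aw by (auto simp: SW_def)
        moreover have "hh (Inl (aw w)) = w" using aw w by (simp add: hh_def)
        ultimately show ?thesis by (metis imageI)
      qed
    qed
    have "finite SW" using finS by (simp add: SW_def)
    have "card (W - Q) \<le> card SW"
      using card_mono[OF finite_imageI[OF \<open>finite SW\<close>] \<open>W - Q \<subseteq> hh ` SW\<close>] card_image_le[OF \<open>finite SW\<close>, of hh]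
      by linarith
    moreover have eq: "(W - Q) \<union> Q = W" by (auto simp: Q_def)
    have "card W \<le> card (W - Q) + card Q" using card_Un_le[of "W - Q" Q] unfolding eq .
    ultimately show ?thesis using cQ by linarith
  qed
  have fin3: "finite SP" "finite SU" "finite SW" using finS by (auto simp: SP_def SU_def SW_def)
  have d1: "SP \<inter> SU = {}" by (auto simp: SP_def SU_def)
  have d2: "(SP \<union> SU) \<inter> SW = {}" using UW_disj by (auto simp: SP_def SU_def SW_def)
  have "card (SP \<union> SU \<union> SW) = card SP + card SU + card SW"
    using fin3 d1 d2 by (simp add: card_Un_disjoint)
  moreover have "card (SP \<union> SU \<union> SW) \<le> card S"
    by (rule card_mono[OF finS]) (auto simp: SP_def SU_def SW_def)
  ultimately have "card SP + card SU + card SW \<le> card S" by linarith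
  thus ?thesis using c1 c2 c3 cardP' cardU cardW s2 sn by linarith
qed

lemma VVI: "x \<in> V \<Longrightarrow> Inl x \<in> VV" "x \<in> V \<Longrightarrow> Inr x \<in> VV"
  by (auto simp: fg_verts_def)

lemma VVD: "Inl x \<in> VV \<Longrightarrow> x \<in> V" "Inr x \<in> VV \<Longrightarrow> x \<in> V"
  by (auto simp: fg_verts_def)

lemma fix_main:
  assumes aut: "is_automorphism VV E \<sigma>"
    and p0: "p0 \<in> P" and p1: "p1 \<in> P" "p1 \<noteq> p0" and u0: "u0 \<in> U" and w0: "w0 \<in> W"
    and fP: "\<forall>p\<in>P-{p0}. \<sigma> (Inl p) = Inl p"
    and fU: "\<forall>u\<in>U-{u0}. \<sigma> (Inr u) = Inr u"
    and fW: "\<forall>w\<in>W-{w0}. \<sigma> (Inr w) = Inr w"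
  shows "\<forall>x\<in>VV. \<sigma> x = x"
proof -
  have bij: "bij_betw \<sigma> VV VV" and e: "\<forall>x\<in>VV. \<forall>y\<in>VV. E x y \<longleftrightarrow> E (\<sigma> x) (\<sigma> y)"
    using aut by (auto simp: is_automorphism_def)
  have inj: "inj_on \<sigma> VV" and im: "\<sigma> ` VV = VV" using bij by (auto simp: bij_betw_def)
  have sV: "\<sigma> x \<in> VV" if "x \<in> VV" for x using im that by blast
  have Es: "E x y \<longleftrightarrow> E (\<sigma> x) (\<sigma> y)" if "x \<in> VV" "y \<in> VV" for x y using e that by blast
  have injD: "x = y" if "\<sigma> x = \<sigma> y" "x \<in> VV" "y \<in> VV" for x y using inj_onD[OF inj] that by blast
  define dg where "dg x = card {y\<in>VV. E x y}" for x
  have dg_pres: "dg (\<sigma> x) = dg x" if "x \<in> VV" for x using aut_deg[OF aut that] by (simp add: dg_def)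
  have dv: "n + 1 \<le> dg (Inr v)"
  proof -
    have sub: "Inr ` (V - {v}) \<union> Inl ` P \<subseteq> {y\<in>VV. E (Inr v) y}"
      using PV by (auto simp: fg_verts_def K_edge_def P_def)
    have "card (Inr ` (V - {v}) \<union> Inl ` P) = card (V - {v}) + card P"
      by (subst card_Un_disjoint) (auto simp: card_image finP finV)
    moreover have "card (V - {v}) = n - 1" using vV cardV finV by simp
    moreover have "card (Inr ` (V - {v}) \<union> Inl ` P) \<le> dg (Inr v)"
      unfolding dg_def by (rule card_mono) (use finVV sub in auto)
    ultimately show ?thesis using cardP' sn by linarith
  qed
  have dother: "dg x \<le> n" if "x \<in> VV" "x \<noteq> Inr v" for x
  proof (cases x)
    case (Inl a)
    hence a: "a \<in> V" using that by (simp add: fg_verts_def image_iff)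
    have sub: "{y\<in>VV. E x y} \<subseteq> Inr ` {g a} \<union> Inl ` (V - {a})"
      using Inl by (auto simp: fg_verts_def K_edge_def)
    have "card (Inr ` {g a} \<union> Inl ` (V - {a}) :: (nat+nat) set) \<le> card (Inr ` {g a} :: (nat+nat) set) + card (Inl ` (V - {a}) :: (nat+nat) set)"
      by (rule card_Un_le)
    moreover have "card (Inl ` (V-{a}) :: (nat+nat) set) = n - 1" using a cardV finV by (simp add: card_image)
    moreover have "card (Inr ` {g a} :: (nat+nat) set) = 1" by simp
    moreover have "card {y\<in>VV. E x y} \<le> card (Inr ` {g a} \<union> Inl ` (V - {a}) :: (nat+nat) set)"
      by (rule card_mono[OF _ sub]) (use finV in simp)
    ultimately show ?thesis unfolding dg_def using sn by linarith
  next
    case (Inr b)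
    hence b: "b \<in> V" "b \<noteq> v" using that by (auto simp: fg_verts_def image_iff)
    define X where "X = {a\<in>V. g a = b}"
    have finX: "finite X" using finV by (simp add: X_def)
    have cX: "card X \<le> Suc 0"
      using finX g_eq b by (subst card_le_Suc0_iff_eq) (auto simp: X_def)
    have sub: "{y\<in>VV. E x y} \<subseteq> Inr ` (V - {b}) \<union> Inl ` X"
      using Inr by (auto simp: fg_verts_def K_edge_def X_def)
    have "card (Inr ` (V - {b}) \<union> Inl ` X :: (nat+nat) set) \<le> card (Inr ` (V - {b}) :: (nat+nat) set) + card (Inl ` X :: (nat+nat) set)"
      by (rule card_Un_le)
    moreover have "card (Inr ` (V-{b}) :: (nat+nat) set) = n - 1" using b cardV finV by (simp add: card_image)
    moreover have "card (Inl ` X :: (nat+nat) set) \<le> card X" by (rule card_image_le[OF finX])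
    moreover have "card {y\<in>VV. E x y} \<le> card (Inr ` (V - {b}) \<union> Inl ` X :: (nat+nat) set)"
      by (rule card_mono[OF _ sub]) (use finV finX in simp)
    ultimately show ?thesis unfolding dg_def using sn cX by linarith
  qed
  have vVV: "Inr v \<in> VV" using vV by (rule VVI)
  have fv: "\<sigma> (Inr v) = Inr v"
  proof (rule ccontr)
    assume ne: "\<sigma> (Inr v) \<noteq> Inr v"
    have "dg (\<sigma> (Inr v)) \<le> n" using dother[OF sV[OF vVV] ne] .
    thus False using dg_pres[OF vVV] dv by linarith
  qed
  have p1V: "p1 \<in> V" "g p1 = v" using p1 PV by (auto simp: P_def)
  have fp1: "\<sigma> (Inl p1) = Inl p1" using fP p1 by auto
  have Pin: "\<sigma> x \<in> Inl ` P" if xin: "x \<in> Inl ` P" for x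
  proof -
    obtain p where p: "p \<in> P" "x = Inl p" using xin by blast
    show ?thesis
    proof (cases "p = p1")
      case True thus ?thesis using fp1 p by auto
    next
      case False
      have pV: "p \<in> V" "g p = v" using p PV by (auto simp: P_def)
      have xVV: "x \<in> VV" using pV p by (simp add: VVI)
      have "E (Inr v) x" using p pV by simp
      hence e1: "E (Inr v) (\<sigma> x)" using Es[OF vVV xVV] fv by simp
      have "E (Inl p1) x" using p False by (simp add: K_edge_def)
      hence e2: "E (Inl p1) (\<sigma> x)" using Es[OF VVI(1)[OF p1V(1)] xVV] fp1 by simp
      have sx: "\<sigma> x \<in> VV" using sV xVV by blast
      show ?thesis
      proof (cases "\<sigma> x")
        case (Inl q)
        then have "q \<in> V" using sx by (simp add: VVD)
        moreover have "g q = v" using e1 Inl by simp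
        ultimately show ?thesis using Inl by (auto simp: P_def)
      next
        case (Inr q)
        have "q = v" using e2 Inr p1V by simp
        thus ?thesis using e1 Inr by (simp add: K_edge_def)
      qed
    qed
  qed
  have fixP: "\<sigma> (Inl p) = Inl p" if "p \<in> P" for p
  proof -
    have "\<sigma> (Inl p0) = Inl p0"
      by (rule one_left[OF inj, of "Inl ` P"]) (use Pin fP p0 PV in \<open>auto simp: fg_verts_def\<close>)
    then show ?thesis using fP that by (cases "p = p0") auto
  qed
  have Lside: "\<exists>a'\<in>V-P. \<sigma> (Inl a) = Inl a'" if "a \<in> V - P" for a
  proof -
    have aV: "a \<in> V" "g a \<noteq> v" using that by (auto simp: P_def)
    have xVV: "Inl a \<in> VV" using aV by (simp add: VVI)
    have "\<not> E (Inr v) (Inl a)" using aV by simp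
    hence ne: "\<not> E (Inr v) (\<sigma> (Inl a))" using Es[OF vVV xVV] fv by simp
    have sx: "\<sigma> (Inl a) \<in> VV" using sV xVV by blast
    show ?thesis
    proof (cases "\<sigma> (Inl a)")
      case (Inl q)
      then have "q \<in> V" using sx by (simp add: VVD)
      moreover have "g q \<noteq> v" using ne Inl by simp
      ultimately show ?thesis using Inl by (auto simp: P_def)
    next
      case (Inr q)
      have "q = v" using ne Inr by (simp add: K_edge_def)
      hence "\<sigma> (Inl a) = \<sigma> (Inr v)" using Inr fv by simp
      hence "Inl a = Inr v" using injD xVV vVV by blast
      thus ?thesis by simp
    qed
  qed
  have Rside: "\<exists>b'\<in>V-{v}. \<sigma> (Inr b) = Inr b'" if "b \<in> V" "b \<noteq> v" for b
  proof -
    have xVV: "Inr b \<in> VV" using that by (simp add: VVI)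
    have "E (Inr v) (Inr b)" using that by (simp add: K_edge_def)
    hence e1: "E (Inr v) (\<sigma> (Inr b))" using Es[OF vVV xVV] fv by simp
    have sx: "\<sigma> (Inr b) \<in> VV" using sV xVV by blast
    show ?thesis
    proof (cases "\<sigma> (Inr b)")
      case (Inl q)
      then have "q \<in> V" using sx by (simp add: VVD)
      moreover have "g q = v" using e1 Inl by simp
      ultimately have "q \<in> P" by (simp add: P_def)
      hence "\<sigma> (Inl q) = \<sigma> (Inr b)" using fixP Inl by simp
      hence "Inl q = Inr b" using injD xVV VVI(1)[OF \<open>q \<in> V\<close>] by blast
      thus ?thesis by simp
    next
      case (Inr q)
      then have "q \<in> V" using sx by (simp add: VVD)
      moreover have "q \<noteq> v" using e1 Inr by (simp add: K_edge_def)
      ultimately show ?thesis using Inr by auto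
    qed
  qed
  have Win: "\<sigma> x \<in> Inr ` W" if xin: "x \<in> Inr ` W" for x
  proof -
    obtain w where w: "w \<in> W" "x = Inr w" using xin by blast
    have "w \<in> g ` (V - P)" using w img_VP by simp
    then obtain a where a: "a \<in> V - P" "g a = w" by blast
    have aV: "a \<in> V" using a by simp
    have wV: "w \<in> V" "w \<noteq> v" using w WV by (auto simp: W_def)
    obtain a' where a': "a' \<in> V - P" "\<sigma> (Inl a) = Inl a'" using Lside[OF a(1)] by blast
    obtain b' where b': "b' \<in> V - {v}" "\<sigma> (Inr w) = Inr b'" using Rside[OF wV] by blast
    have "E (Inl a) (Inr w)" using a by simp
    hence "E (\<sigma> (Inl a)) (\<sigma> (Inr w))" using iffD1[OF Es[OF VVI(1)[OF aV] VVI(2)[OF wV(1)]]] by blast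
    hence "E (Inl a') (Inr b')" using a' b' by simp
    hence "g a' = b'" by simp
    hence "b' \<in> W" using a' b' by (auto simp: W_def)
    thus ?thesis using w b' by simp
  qed
  have fixW: "\<sigma> (Inr w) = Inr w" if "w \<in> W" for w
  proof -
    have "\<sigma> (Inr w0) = Inr w0"
      by (rule one_left[OF inj, of "Inr ` W"]) (use Win fW w0 WV in \<open>auto simp: fg_verts_def\<close>)
    then show ?thesis using fW that by (cases "w = w0") auto
  qed
  have Uin: "\<sigma> x \<in> Inr ` U" if xin: "x \<in> Inr ` U" for x
  proof -
    obtain u where u: "u \<in> U" "x = Inr u" using xin by blast
    have uV: "u \<in> V" "u \<noteq> v" using u v_img by (auto simp: U_def)
    obtain b' where b': "b' \<in> V - {v}" "\<sigma> (Inr u) = Inr b'" using Rside[OF uV] by blast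
    show ?thesis
    proof (cases "b' \<in> g ` V")
      case True
      hence "b' \<in> W" using b' by (simp add: W_def)
      hence "\<sigma> (Inr b') = \<sigma> (Inr u)" using fixW b' by simp
      hence "Inr b' = Inr u" using injD VVI(2)[OF uV(1)] VVI(2)[of b'] b' by blast
      hence "u \<in> W" using \<open>b' \<in> W\<close> by simp
      thus ?thesis using u UW_disj by blast
    next
      case False
      thus ?thesis using b' u by (auto simp: U_def)
    qed
  qed
  have fixU: "\<sigma> (Inr u) = Inr u" if "u \<in> U" for u
  proof -
    have "\<sigma> (Inr u0) = Inr u0"
      by (rule one_left[OF inj, of "Inr ` U"]) (use Uin fU u0 UV in \<open>auto simp: fg_verts_def\<close>)
    then show ?thesis using fU that by (cases "u = u0") auto
  qed
  have fixR: "\<sigma> (Inr b) = Inr b" if bV: "b \<in> V" for b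
  proof -
    consider "b = v" | "b \<in> W" | "b \<in> U" using bV by (auto simp: W_def U_def)
    thus ?thesis using fv fixW fixU by cases auto
  qed
  have fixL: "\<sigma> (Inl a) = Inl a" if "a \<in> V" for a
  proof (cases "a \<in> P")
    case True thus ?thesis using fixP by simp
  next
    case False
    hence a: "a \<in> V - P" using that by simp
    have gaV: "g a \<in> V" "g a \<noteq> v" using a gVi by (auto simp: P_def)
    obtain a' where a': "a' \<in> V - P" "\<sigma> (Inl a) = Inl a'" using Lside[OF a] by blast
    have "E (Inl a) (Inr (g a))" by simp
    hence "E (\<sigma> (Inl a)) (\<sigma> (Inr (g a)))" using iffD1[OF Es[OF VVI(1)[OF that] VVI(2)[OF gaV(1)]]] by blast
    hence "E (Inl a') (Inr (g a))" using a' fixR[OF gaV(1)] by simp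
    hence "g a' = g a" by simp
    hence "a' = a" using g_eq[of a' a] a' a gaV by auto
    thus ?thesis using a' by simp
  qed
  show ?thesis
  proof
    fix x assume "x \<in> VV"
    thus "\<sigma> x = x" using fixL fixR by (cases x) (auto simp: fg_verts_def)
  qed
qed

lemma upper: "\<exists>S. fixing_set VV E S \<and> card S = 2*n - (s+3)"
proof -
  have "P \<noteq> {}" using cardP' by auto
  then obtain p0 where p0: "p0 \<in> P" by blast
  have "card (P - {p0}) = n - s" using cardP' p0 finP by simp
  hence "P - {p0} \<noteq> {}" using sn by (metis card.empty diff_is_0_eq leD)
  then obtain p1 where p1: "p1 \<in> P" "p1 \<noteq> p0" by blast
  have "U \<noteq> {}" using cardU sn by auto
  then obtain u0 where u0: "u0 \<in> U" by blast
  have "W \<noteq> {}" using cardW s2 by auto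
  then obtain w0 where w0: "w0 \<in> W" by blast
  define S0 :: "(nat + nat) set" where "S0 = Inl ` (P - {p0}) \<union> Inr ` (U - {u0}) \<union> Inr ` (W - {w0})"
  have c1: "card (Inl ` (P - {p0}) :: (nat+nat) set) = n - s" using cardP' p0 finP by (simp add: card_image)
  have c2: "card (Inr ` (U - {u0}) :: (nat+nat) set) = n - s - 1" using cardU u0 finU by (simp add: card_image)
  have c3: "card (Inr ` (W - {w0}) :: (nat+nat) set) = s - 2" using cardW w0 finW by (simp add: card_image)
  have "card S0 = (n - s) + (n - s - 1) + (s - 2)"
    unfolding S0_def using c1 c2 c3 UW_disj finP finU finW
    by (subst card_Un_disjoint; auto)+
  hence cS: "card S0 = 2*n - (s+3)" using s2 sn by linarith
  have "fixing_set VV E S0"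
    unfolding fixing_set_def
  proof (intro conjI allI impI)
    show "S0 \<subseteq> VV" using PV UV WV by (auto simp: S0_def fg_verts_def)
  next
    fix \<sigma> assume h: "is_automorphism VV E \<sigma> \<and> (\<forall>x\<in>S0. \<sigma> x = x)"
    show "\<forall>x\<in>VV. \<sigma> x = x"
      by (rule fix_main[OF _ p0 p1 u0 w0]) (use h in \<open>auto simp: S0_def\<close>)
  qed
  thus ?thesis using cS by blast
qed

end

theorem corollary3p3:
  fixes n s :: nat and g :: "nat \<Rightarrow> nat"
  assumes "n \<ge> 3"
    and "g \<in> K_verts n \<rightarrow> K_verts n"
    and "s = card (g ` K_verts n)"
    and "2 < s" and "s < n"
    and "\<exists>v\<in>K_verts n. card {a \<in> K_verts n. g a = v} = n - s + 1"
  shows "fix_num (fg_verts (K_verts n)) (fg_edge K_edge g) = 2 * n - (s + 3)"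
proof -
  obtain v where vV: "v \<in> K_verts n" and cv: "card {a \<in> K_verts n. g a = v} = n - s + 1"
    using assms(6) by blast
  interpret fgK n s g v using assms vV cv by unfold_locales auto
  show ?thesis
    unfolding fix_num_def
  proof (rule Least_equality)
    show "\<exists>S. fixing_set VV E S \<and> card S = 2 * n - (s + 3)" by (rule upper)
  next
    fix y assume "\<exists>S. fixing_set VV E S \<and> card S = y"
    then obtain S where "fixing_set VV E S" "card S = y" by blast
    thus "2 * n - (s + 3) \<le> y" using lower by blast
  qed
qed

end
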